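(* The MPB rule $M$ does not satisfy the narrow-top criterion; that is, there exists a PB instance $I$ and a project $p$ with $p\in A_i$ for every voter $i\in N$ such that $p\notin W_M(I)$.
   Context: A PB instance is $I=\langle N,P,c,b,\mathcal{A}\rangle$ with voters $N=\{1,\dots,n\}$, projects $P$, costs $c:P\to\mathbb{N}$, budget $b\in\mathbb{N}$, and approval sets $A_i\subseteq P$. $c(S)=\sum_{p\in S}c(p)$; $S$ is feasible if $c(S)\le b$; $u_i(S)=c(S\cap A_i)$. The MPB rule $M$ outputs $M(I)$, the set of all feasible $S$ maximizing $\min_{i\in N}u_i(S)$ among feasible sets. $W_M(I)=\{p\in P:\exists S\in M(I),\ p\in S\}$. *)

theory Defs
  imports Main
begin

definition pb_cost :: "('p \<Rightarrow> nat) \<Rightarrow> 'p set \<Rightarrow> nat" where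
  "pb_cost c S = (\<Sum>q\<in>S. c q)"

definition pb_feasible :: "'p set \<Rightarrow> ('p \<Rightarrow> nat) \<Rightarrow> nat \<Rightarrow> 'p set \<Rightarrow> bool" where
  "pb_feasible P c b S \<longleftrightarrow> S \<subseteq> P \<and> pb_cost c S \<le> b"

definition pb_util :: "('p \<Rightarrow> nat) \<Rightarrow> (nat \<Rightarrow> 'p set) \<Rightarrow> nat \<Rightarrow> 'p set \<Rightarrow> nat" where
  "pb_util c A i S = pb_cost c (S \<inter> A i)"

definition pb_minutil :: "nat \<Rightarrow> ('p \<Rightarrow> nat) \<Rightarrow> (nat \<Rightarrow> 'p set) \<Rightarrow> 'p set \<Rightarrow> nat" where
  "pb_minutil n c A S = Min ((\<lambda>i. pb_util c A i S) ` {1..n})"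

definition MPB :: "nat \<Rightarrow> 'p set \<Rightarrow> ('p \<Rightarrow> nat) \<Rightarrow> nat \<Rightarrow> (nat \<Rightarrow> 'p set) \<Rightarrow> 'p set set" where
  "MPB n P c b A = {S. pb_feasible P c b S \<and>
     (\<forall>T. pb_feasible P c b T \<longrightarrow> pb_minutil n c A T \<le> pb_minutil n c A S)}"

definition W_MPB :: "nat \<Rightarrow> 'p set \<Rightarrow> ('p \<Rightarrow> nat) \<Rightarrow> nat \<Rightarrow> (nat \<Rightarrow> 'p set) \<Rightarrow> 'p set" where
  "W_MPB n P c b A = {p\<in>P. \<exists>S\<in>MPB n P c b A. p \<in> S}"

end

theory Submission
  imports Defs
begin

lemma subs: "S \<subseteq> {0::nat,1,2} \<Longrightarrow> 0 \<in> S \<Longrightarrow> S = {0} \<or> S = {0,1} \<or> S = {0,2} \<or> S = {0,1,2}"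
  by (cases "1 \<in> S"; cases "2 \<in> S") auto

theorem proposition2:
  shows "\<exists>(n::nat) (P::nat set) (c::nat \<Rightarrow> nat) (b::nat) (A::nat \<Rightarrow> nat set) p.
     n \<ge> 1 \<and> finite P \<and> (\<forall>q\<in>P. c q > 0) \<and> (\<forall>i\<in>{1..n}. A i \<subseteq> P) \<and>
     p \<in> P \<and> c p \<le> b \<and> (\<forall>i\<in>{1..n}. p \<in> A i) \<and> p \<notin> W_MPB n P c b A"
proof -
  define c :: "nat \<Rightarrow> nat" where "c = (\<lambda>q. if q = 0 then 1 else 2)"
  define A :: "nat \<Rightarrow> nat set" where "A = (\<lambda>i. if i = 1 then {0,1} else {0,2})"
  have c0: "c 0 = 1" "c 1 = 2" "c 2 = 2" by (simp_all add: c_def)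
  have A12: "A 1 = {0,1}" "A 2 = {0,2}" by (simp_all add: A_def)
  have two: "{1..2::nat} = {1,2}" by auto
  have mu: "pb_minutil 2 c A S = min (pb_cost c (S \<inter> {0,1})) (pb_cost c (S \<inter> {0,2}))" for S
    unfolding pb_minutil_def pb_util_def two by (simp add: A_def)
  have "0 \<notin> W_MPB 2 {0,1,2} c 4 A"
  proof
    assume "0 \<in> W_MPB 2 {0,1,2} c 4 A"
    then obtain S where S: "S \<in> MPB 2 {0,1,2} c 4 A" "0 \<in> S" unfolding W_MPB_def by auto
    have f: "pb_feasible {0,1,2} c 4 {1,2}"
      by (simp add: pb_feasible_def pb_cost_def c_def)
    have m: "pb_minutil 2 c A {1,2} = 2"
      unfolding mu by (simp add: pb_cost_def c_def)
    from S f have le: "pb_minutil 2 c A {1,2} \<le> pb_minutil 2 c A S"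
      unfolding MPB_def by blast
    from S have sub: "S \<subseteq> {0,1,2}" and cs: "pb_cost c S \<le> 4"
      unfolding MPB_def pb_feasible_def by auto
    from subs[OF sub S(2)] have "S = {0} \<or> S = {0,1} \<or> S = {0,2}"
      using cs by (auto simp: pb_cost_def c_def)
    then have "pb_minutil 2 c A S \<le> 1"
      unfolding mu by (auto simp: pb_cost_def c_def)
    with le m show False by simp
  qed
  then show ?thesis
    apply (rule_tac x=2 in exI, rule_tac x="{0,1,2}" in exI, rule_tac x=c in exI,
           rule_tac x=4 in exI, rule_tac x=A in exI, rule_tac x=0 in exI)
    by (auto simp: c_def A_def)
qed

end
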